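(* Let $(X,d)$ be a metric space, let $k\ge 1$ and let $p_1,\dots,p_k\in X$ be arbitrary points. For $p\in X$ define $\mu_p(x,y)=d(x,y)+\sqrt{d(x,p)d(y,p)}$. Then for all $x,y,z\in X$, $$\prod_{i=1}^k\big(\mu_{p_i}(x,z)+\mu_{p_i}(y,z)\big)\leq 9^k\Big(\prod_{i=1}^k\mu_{p_i}(x,z)+\prod_{i=1}^k\mu_{p_i}(y,z)\Big).$$ *)

theory Defs
  imports "HOL-Analysis.Analysis"
begin

definition mu :: "'a::metric_space \<Rightarrow> 'a \<Rightarrow> 'a \<Rightarrow> real" where
  "mu p x y = dist x y + sqrt (dist x p * dist y p)"

end

theory Submission
  imports Defs
begin

lemma key_ineq:
  fixes D t s e :: real
  assumes "0 \<le> D" "0 \<le> t" "0 \<le> s" "e \<le> D + t" "0 \<le> e" "t - D \<le> s"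
  shows "e * t \<le> 9 * (D * D + s * t)"
proof (cases "t \<le> 2 * D")
  case True
  have "e * t \<le> (D + t) * t" using assms by (simp add: mult_right_mono)
  also have "\<dots> \<le> (3 * D) * (2 * D)" using True assms by (intro mult_mono) auto
  also have "\<dots> \<le> 9 * (D * D)" using assms by simp
  also have "\<dots> \<le> 9 * (D * D + s * t)" using assms by simp
  finally show ?thesis .
next
  case False
  have "e * t \<le> (D + t) * t" using assms by (simp add: mult_right_mono)
  also have "\<dots> \<le> (3 * s) * t" using False assms by (intro mult_right_mono) auto
  also have "\<dots> \<le> 9 * (D * D + s * t)" using assms by (simp add: mult_nonneg_nonneg)
  finally show ?thesis .
qed

lemma mu_nonneg: "0 \<le> mu p x y"
  by (simp add: mu_def)

lemma mu_cmp:
  assumes "dist x z \<le> dist y z"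
  shows "mu p x z \<le> 4 * mu p y z"
proof -
  define D where "D = dist y z"
  define t where "t = dist z p"
  define s where "s = dist y p"
  define e where "e = dist x p"
  have e1: "e \<le> D + t" unfolding e_def D_def t_def
    using assms dist_triangle[of x p z] by simp
  have s1: "t - D \<le> s" unfolding s_def D_def t_def
    using dist_triangle[of z p y] by (simp add: dist_commute)
  have nn: "0 \<le> D" "0 \<le> t" "0 \<le> s" "0 \<le> e" by (auto simp: D_def t_def s_def e_def)
  have k: "e * t \<le> 9 * (D * D + s * t)" using key_ineq[OF nn(1,2,3) e1 nn(4) s1] .
  have b2: "D * D + s * t \<le> (D + sqrt (s * t))^2"
    using nn by (simp add: power2_eq_square algebra_simps)
  have "e * t \<le> (3 * (D + sqrt (s * t)))^2" proof -
    have "(3 * (D + sqrt (s * t)))^2 = 9 * (D + sqrt (s * t))^2" by (simp only: power_mult_distrib) simp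
    moreover have "9 * (D * D + s * t) \<le> 9 * (D + sqrt (s * t))^2" using b2 by simp
    ultimately show ?thesis using k by simp
  qed
  hence "sqrt (e * t) \<le> 3 * (D + sqrt (s * t))"
    using nn by (meson real_le_lsqrt real_sqrt_ge_zero mult_nonneg_nonneg add_nonneg_nonneg zero_le_numeral)
  moreover have "0 \<le> sqrt (s * t)" using nn by simp
  ultimately show ?thesis using assms unfolding mu_def D_def t_def s_def e_def
    by (simp only: distrib_left)
qed

lemma one_side:
  fixes p :: "nat \<Rightarrow> 'a::metric_space"
  assumes "dist x z \<le> dist y z"
  shows "(\<Prod>i=1..k. mu (p i) x z + mu (p i) y z)
           \<le> 9 ^ k * ((\<Prod>i=1..k. mu (p i) x z) + (\<Prod>i=1..k. mu (p i) y z))"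
proof -
  have "(\<Prod>i=1..k. mu (p i) x z + mu (p i) y z) \<le> (\<Prod>i=1..k. 9 * mu (p i) y z)"
  proof (rule prod_mono)
    fix i
    have a: "mu (p i) x z \<le> 4 * mu (p i) y z" by (rule mu_cmp[OF assms])
    have b: "0 \<le> mu (p i) x z" "0 \<le> mu (p i) y z" by (rule mu_nonneg)+
    show "0 \<le> mu (p i) x z + mu (p i) y z \<and> mu (p i) x z + mu (p i) y z \<le> 9 * mu (p i) y z"
      using a b by linarith
  qed
  also have "\<dots> = 9 ^ k * (\<Prod>i=1..k. mu (p i) y z)"
    by (simp add: prod.distrib)
  also have "\<dots> \<le> 9 ^ k * ((\<Prod>i=1..k. mu (p i) x z) + (\<Prod>i=1..k. mu (p i) y z))"
    using prod_nonneg[of "{1..k}" "\<lambda>i. mu (p i) x z"] mu_nonneg by (simp add: mu_nonneg)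
  finally show ?thesis .
qed

theorem lemma3p3:
  fixes p :: "nat \<Rightarrow> 'a::metric_space" and k :: nat and x y z :: 'a
  assumes "k \<ge> 1"
  shows "(\<Prod>i=1..k. mu (p i) x z + mu (p i) y z)
           \<le> 9 ^ k * ((\<Prod>i=1..k. mu (p i) x z) + (\<Prod>i=1..k. mu (p i) y z))"
proof (cases "dist x z \<le> dist y z")
  case True
  then show ?thesis by (rule one_side)
next
  case False
  then have "dist y z \<le> dist x z" by simp
  from one_side[OF this, of p k] show ?thesis by (simp add: add.commute)
qed

end
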